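(* For $n\ge 1$ let $G_n$ be the number of domino tilings of $C_4\times P_n$. Then for all $n\ge 1$ $$G_n=\frac16\Big[(2+\sqrt3)^{n+1}+(2-\sqrt3)^{n+1}\Big]+\frac13(-1)^n,$$ and for all $n\ge1$ we have $G_{2n}=A_n^2$ and $G_{2n-1}=2B_n^2$, where $$A_n=\frac16\Big[(3+\sqrt3)(2+\sqrt3)^n+(3-\sqrt3)(2-\sqrt3)^n\Big],\qquad B_n=\frac{1}{2\sqrt3}\Big[(2+\sqrt3)^n-(2-\sqrt3)^n\Big].$$
   Context: For graphs $H,K$, $H\times K$ denotes the Cartesian product. $P_n$ is the path on $n$ vertices and $C_4$ is the cycle on $4$ vertices. A domino tiling of a finite graph means a perfect matching of it, so the number of domino tilings of a graph is its number of perfect matchings. Equivalently, $A_n$ and $B_n$ are the integer sequences with $A_1=3$, $A_2=11$, $A_n=4A_{n-1}-A_{n-2}$, and $B_1=1$, $B_2=4$, $B_n=4B_{n-1}-B_{n-2}$ for $n\ge3$. *)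

theory Defs
  imports Complex_Main
begin

text \<open>Finite simple graphs as a pair (vertex set, edge set), edges being 2-element sets.\<close>
type_synonym 'a sgraph = "'a set \<times> 'a set set"

definition path_graph :: "nat \<Rightarrow> nat sgraph" where
  "path_graph n = ({1..n}, {{i, i + 1} | i. 1 \<le> i \<and> i + 1 \<le> n})"

text \<open>Cycle C_n on vertices 0..n-1 (used for n >= 3).\<close>
definition cycle_graph :: "nat \<Rightarrow> nat sgraph" where
  "cycle_graph n = ({0..<n}, {{i, (i + 1) mod n} | i. i < n})"

definition cart_prod :: "'a sgraph \<Rightarrow> 'b sgraph \<Rightarrow> ('a \<times> 'b) sgraph" where
  "cart_prod G H =
     (fst G \<times> fst H,
      {{(a, w), (b, w)} | a b w. {a, b} \<in> snd G \<and> w \<in> fst H} \<union>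
      {{(v, x), (v, y)} | v x y. v \<in> fst G \<and> {x, y} \<in> snd H})"

text \<open>Perfect matchings (= domino tilings) of a graph.\<close>
definition perfect_matchings :: "'a sgraph \<Rightarrow> 'a set set set" where
  "perfect_matchings G = {M. M \<subseteq> snd G \<and> (\<forall>v\<in>fst G. \<exists>!e. e \<in> M \<and> v \<in> e)}"

definition num_domino_tilings :: "'a sgraph \<Rightarrow> nat" where
  "num_domino_tilings G = card (perfect_matchings G)"

end

theory Submission imports Defs begin

definition hor :: "nat \<Rightarrow> (nat\<times>nat) set set" where
 "hor w = {{(0,w),(1,w)},{(1,w),(2,w)},{(2,w),(3,w)},{(3,w),(0,w)}}"
definition ver :: "nat \<Rightarrow> nat \<Rightarrow> (nat\<times>nat) set" where "ver v x = {(v,x),(v,Suc x)}"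
definition EE :: "nat \<Rightarrow> (nat\<times>nat) set set" where
 "EE n = (\<Union>w\<in>{1..n}. hor w) \<union> {ver v x | v x. v<4 \<and> 1\<le>x \<and> x<n}"
definition star :: "'a \<Rightarrow> 'a set set \<Rightarrow> 'a set set" where "star p M = {e\<in>M. p\<in>e}"
definition PM :: "nat \<Rightarrow> nat set \<Rightarrow> (nat\<times>nat) set set set" where
 "PM n S = {M. M \<subseteq> EE n \<and> (\<forall>v<4. \<forall>x\<in>{1..n}. if x = n \<and> v\<in>S then star (v,x) M = {} else (\<exists>e. star (v,x) M = {e}))}"
definition Hs :: "nat \<Rightarrow> nat set \<Rightarrow> (nat\<times>nat) set set set" where
 "Hs w U = {H. H \<subseteq> hor w \<and> (\<forall>v<4. if v\<in>U then (\<exists>e. star (v,w) H = {e}) else star (v,w) H = {})}"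
definition vset :: "nat \<Rightarrow> nat set \<Rightarrow> (nat\<times>nat) set set" where "vset n T = (\<lambda>v. ver v n) ` T"

lemma cyc4: "snd (cycle_graph 4) = {{0,1},{1,2},{2,3},{3,0}}"
proof -
  have e: "{0..<4::nat} = {0,1,2,3}" by (auto simp: eval_nat_numeral)
  have i: "(\<lambda>i::nat. {i,(i+1) mod 4}) ` {0,1,2,3} = {{0,(0+1) mod 4},{1,(1+1) mod 4},{2,(2+1) mod 4},{3,(3+1) mod 4}}"
    by (simp only: image_insert image_empty)
  have m: "(0+1) mod 4 = (1::nat)" "(1+1) mod 4 = (2::nat)" "(2+1) mod 4 = (3::nat)" "(3+1) mod 4 = (0::nat)" by simp_all
  have "{{i, (i+1) mod 4} | i::nat. i<4} = (\<lambda>i. {i,(i+1) mod 4}) ` {0..<4}" by auto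
  also have "\<dots> = {{0,1},{1,2},{2,3},{3,0}}" unfolding e i m by (rule refl)
  finally show ?thesis unfolding cycle_graph_def snd_conv .
qed
lemma hlift: assumes "\<forall>X\<in>C. \<exists>a b. X = {a,b}" shows
  "{{(a, w), (b, w)} | a b w. {a, b} \<in> C \<and> w \<in> W} = {(\<lambda>x. (x,w)) ` X | X w. X \<in> C \<and> w\<in>W}"
proof (rule set_eqI, rule iffI)
  fix e assume "e \<in> {{(a, w), (b, w)} | a b w. {a, b} \<in> C \<and> w \<in> W}"
  then obtain a b w where "e = {(a,w),(b,w)}" "{a,b}\<in>C" "w\<in>W" by blast
  then show "e \<in> {(\<lambda>x. (x,w)) ` X | X w. X \<in> C \<and> w\<in>W}"
    by (intro CollectI exI[of _ "{a,b}"] exI[of _ w]) simp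
next
  fix e assume "e \<in> {(\<lambda>x. (x,w)) ` X | X w. X \<in> C \<and> w\<in>W}"
  then obtain X w where "e = (\<lambda>x. (x,w)) ` X" "X\<in>C" "w\<in>W" by blast
  moreover obtain a b where "X = {a,b}" using assms \<open>X\<in>C\<close> by blast
  ultimately show "e \<in> {{(a, w), (b, w)} | a b w. {a, b} \<in> C \<and> w \<in> W}"
    by (intro CollectI exI[of _ a] exI[of _ b] exI[of _ w]) simp
qed

lemma vlift: assumes "\<forall>X\<in>C. \<exists>a b. X = {a,b}" shows
  "{{(v, x), (v, y)} | v x y. v \<in> V \<and> {x, y} \<in> C} = {(\<lambda>x. (v,x)) ` X | v X. v \<in> V \<and> X\<in>C}"
proof (rule set_eqI, rule iffI)
  fix e assume "e \<in> {{(v, x), (v, y)} | v x y. v \<in> V \<and> {x, y} \<in> C}"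
  then obtain v x y where "e = {(v,x),(v,y)}" "{x,y}\<in>C" "v\<in>V" by blast
  then show "e \<in> {(\<lambda>x. (v,x)) ` X | v X. v \<in> V \<and> X\<in>C}"
    by (intro CollectI exI[of _ v] exI[of _ "{x,y}"]) simp
next
  fix e assume "e \<in> {(\<lambda>x. (v,x)) ` X | v X. v \<in> V \<and> X\<in>C}"
  then obtain v X where "e = (\<lambda>x. (v,x)) ` X" "X\<in>C" "v\<in>V" by blast
  moreover obtain a b where "X = {a,b}" using assms \<open>X\<in>C\<close> by blast
  ultimately show "e \<in> {{(v, x), (v, y)} | v x y. v \<in> V \<and> {x, y} \<in> C}"
    by (intro CollectI exI[of _ v] exI[of _ a] exI[of _ b]) simp
qed
lemma graph_eq: "fst (cart_prod (cycle_graph 4) (path_graph n)) = {0..<4} \<times> {1..n}"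
   "snd (cart_prod (cycle_graph 4) (path_graph n)) = EE n"
proof -
  show "fst (cart_prod (cycle_graph 4) (path_graph n)) = {0..<4} \<times> {1..n}"
    by (simp add: cart_prod_def cycle_graph_def path_graph_def)
  let ?C = "{{0,1},{1,2},{2,3},{3,0}} :: nat set set"
  have C2: "\<forall>X\<in>?C. \<exists>a b. X = {a,b}" by blast
  have hw: "hor w = (\<lambda>X. (\<lambda>x. (x,w)) ` X) ` ?C" for w by (simp add: hor_def)
  have fp: "fst (path_graph n) = {1..n}" by (simp add: path_graph_def)
  have h: "{{(a, w), (b, w)} | a b w. {a, b} \<in> snd (cycle_graph 4) \<and> w \<in> fst (path_graph n)} = (\<Union>w\<in>{1..n}. hor w)"
    unfolding cyc4 hlift[OF C2] hw fp by blast
  have P2: "\<forall>X\<in>snd (path_graph n). \<exists>a b. X = {a,b}" unfolding path_graph_def by auto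
  have vv: "ver v i = (\<lambda>x. (v,x)) ` {i, i+1}" for v i by (simp add: ver_def)
  have v: "{{(v, x), (v, y)} | v x y. v \<in> fst (cycle_graph 4) \<and> {x, y} \<in> snd (path_graph n)}
        = {ver v x | v x. v<4 \<and> 1\<le>x \<and> x<n}"
    unfolding vlift[OF P2]
  proof (rule set_eqI, rule iffI)
    fix e assume "e \<in> {Pair v ` X |v X. v \<in> fst (cycle_graph 4) \<and> X \<in> snd (path_graph n)}"
    then obtain v X where e: "e = Pair v ` X" "v \<in> fst (cycle_graph 4)" "X \<in> snd (path_graph n)" by blast
    then obtain i where "X = {i, i+1}" "1 \<le> i" "i+1 \<le> n" by (auto simp: path_graph_def)
    then show "e \<in> {ver v x | v x. v<4 \<and> 1\<le>x \<and> x<n}"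
      using e by (intro CollectI exI[of _ v] exI[of _ i]) (simp add: vv cycle_graph_def)
  next
    fix e assume "e \<in> {ver v x | v x. v<4 \<and> 1\<le>x \<and> x<n}"
    then obtain v i where e: "e = ver v i" "v<4" "1 \<le> i" "i < n" by blast
    have "{i, i+1} \<in> snd (path_graph n)" using e by (auto simp: path_graph_def)
    then show "e \<in> {Pair v ` X |v X. v \<in> fst (cycle_graph 4) \<and> X \<in> snd (path_graph n)}"
      using e by (intro CollectI exI[of _ v] exI[of _ "{i,i+1}"]) (simp add: vv cycle_graph_def)
  qed
  show "snd (cart_prod (cycle_graph 4) (path_graph n)) = EE n"
    by (simp only: cart_prod_def snd_conv h v EE_def)
qed

lemma star_unique: "(\<exists>!e. e \<in> M \<and> p \<in> e) \<longleftrightarrow> (\<exists>e. star p M = {e})"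
  unfolding star_def
proof
  assume "\<exists>!e. e \<in> M \<and> p \<in> e"
  then obtain e where "e \<in> M \<and> p \<in> e" "\<And>e'. e' \<in> M \<and> p \<in> e' \<Longrightarrow> e' = e" by blast
  then have "{e\<in>M. p\<in>e} = {e}" by blast
  then show "\<exists>e. {e\<in>M. p\<in>e} = {e}" ..
next
  assume "\<exists>e. {e\<in>M. p\<in>e} = {e}"
  then obtain e where "{e\<in>M. p\<in>e} = {e}" by blast
  then show "\<exists>!e. e \<in> M \<and> p \<in> e" by (metis (mono_tags, lifting) mem_Collect_eq singletonD singletonI)
qed

lemma G_PM: "num_domino_tilings (cart_prod (cycle_graph 4) (path_graph n)) = card (PM n {})"
  unfolding num_domino_tilings_def perfect_matchings_def graph_eq PM_def star_unique[symmetric]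
  by (rule arg_cong[where f=card]) (simp add: Ball_def, blast)

lemma star_Un: "star p (A \<union> B) = star p A \<union> star p B" by (auto simp: star_def)

lemma hor_pt: "e \<in> hor w \<Longrightarrow> p \<in> e \<Longrightarrow> snd p = w \<and> fst p < 4"
  unfolding hor_def by auto

lemma star_hor: "H \<subseteq> hor w \<Longrightarrow> snd p \<noteq> w \<Longrightarrow> star p H = {}"
  unfolding star_def using hor_pt by blast

lemma EE_pt: "e \<in> EE n \<Longrightarrow> p \<in> e \<Longrightarrow> 1 \<le> snd p \<and> snd p \<le> n \<and> fst p < 4"
  unfolding EE_def ver_def using hor_pt by fastforce

lemma star_EE: "M \<subseteq> EE n \<Longrightarrow> n < snd p \<Longrightarrow> star p M = {}"
  unfolding star_def using EE_pt by fastforce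

lemma star_vset: "star (v,x) (vset n T) = (if v\<in>T \<and> (x = n \<or> x = Suc n) then {ver v n} else {})"
  unfolding star_def vset_def ver_def by auto

lemma ver_notin_EE: "ver v n \<notin> EE n"
  using EE_pt[of "ver v n" n "(v, Suc n)"] by (auto simp: ver_def)

lemma ver_notin_hor: "ver v n \<notin> hor w"
  using hor_pt[of "ver v n" w "(v, Suc n)"] hor_pt[of "ver v n" w "(v, n)"] by (auto simp: ver_def)

lemma EE_Suc: "1 \<le> n \<Longrightarrow> EE (Suc n) = EE n \<union> hor (Suc n) \<union> vset n {0..<4}"
  unfolding EE_def vset_def by (auto simp: le_Suc_eq less_Suc_eq; blast)

lemma finite_hor: "finite (hor w)" by (simp add: hor_def)

lemma finite_EE: "finite (EE n)"
proof -
  have "{ver v x | v x. v<4 \<and> 1\<le>x \<and> x<n} = (\<lambda>(v,x). ver v x) ` ({0..<4}\<times>{1..<n})" by force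
  then show ?thesis unfolding EE_def using finite_hor by simp
qed

lemma finite_PM: "finite (PM n S)"
  by (rule finite_subset[of _ "Pow (EE n)"]) (auto simp: PM_def finite_EE)

lemma hor_ne: "e \<in> hor w \<Longrightarrow> \<exists>p. p \<in> e" unfolding hor_def by auto

lemma hor_EE_disj: "hor (Suc n) \<inter> EE n = {}"
  using hor_ne hor_pt EE_pt by fastforce

lemma vset_hor_disj: "vset n T \<inter> hor w = {}"
  using ver_notin_hor unfolding vset_def by auto

lemma vset_EE_disj: "vset n T \<inter> EE n = {}"
  using ver_notin_EE unfolding vset_def by auto

lemma ver_inj: "ver v n = ver u n \<longleftrightarrow> v = u"
  unfolding ver_def by (auto simp: doubleton_eq_iff)

lemma recoverT:
  assumes "T \<subseteq> {0..<4}" "H \<subseteq> hor (Suc n)" "M' \<subseteq> EE n"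
  shows "{v. v<4 \<and> ver v n \<in> H \<union> vset n T \<union> M'} = T"
  using assms ver_notin_hor ver_notin_EE ver_inj unfolding vset_def by auto

lemma recoverH:
  assumes "H \<subseteq> hor (Suc n)" "M' \<subseteq> EE n"
  shows "(H \<union> vset n T \<union> M') \<inter> hor (Suc n) = H"
  using assms hor_EE_disj vset_hor_disj by blast

lemma recoverM:
  assumes "H \<subseteq> hor (Suc n)" "M' \<subseteq> EE n"
  shows "(H \<union> vset n T \<union> M') \<inter> EE n = M'"
  using assms hor_EE_disj vset_EE_disj by blast

lemma sing1: assumes "X \<union> {a} = {e}" "a \<notin> X" shows "X = {}"
proof -
  have "a = e" using assms(1) by (metis Un_iff singletonD singletonI)
  show ?thesis
  proof (rule ccontr)
    assume "X \<noteq> {}" then obtain x where x: "x \<in> X" by blast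
    then have "x \<in> {e}" using assms(1) by (metis Un_iff)
    then show False using x \<open>a = e\<close> assms(2) by simp
  qed
qed
lemma sing2: "{a} \<union> X = {e} \<Longrightarrow> a \<notin> X \<Longrightarrow> X = {}" using sing1[of X a e] by (simp add: Un_commute)

lemma PM_Suc_eq:
  assumes n: "1 \<le> n" and S: "S \<subseteq> {0..<4}"
  shows "PM (Suc n) S = (\<Union>T\<in>Pow({0..<4}-S). (\<lambda>(H,M'). H \<union> vset n T \<union> M') ` (Hs (Suc n) ({0..<4}-S-T) \<times> PM n T))"
proof (rule set_eqI, rule iffI)
  fix M assume M: "M \<in> PM (Suc n) S"
  define T where "T = {v. v<4 \<and> ver v n \<in> M}"
  define H where "H = M \<inter> hor (Suc n)"
  define M' where "M' = M \<inter> EE n"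
  have Msub: "M \<subseteq> EE (Suc n)" using M unfolding PM_def by auto
  have Mc: "\<And>v x. v<4 \<Longrightarrow> x\<in>{1..Suc n} \<Longrightarrow> if x = Suc n \<and> v\<in>S then star (v,x) M = {} else (\<exists>e. star (v,x) M = {e})"
    using M unfolding PM_def by auto
  have decomp: "M = H \<union> vset n T \<union> M'"
    using Msub unfolding EE_Suc[OF n] H_def M'_def T_def vset_def by auto
  have sd: "star p M = star p H \<union> star p (vset n T) \<union> star p M'" for p using decomp star_Un by metis
  have HH: "H \<subseteq> hor (Suc n)" and MM: "M' \<subseteq> EE n" by (auto simp: H_def M'_def)
  have TS: "T \<subseteq> {0..<4}-S"
  proof
    fix v assume "v \<in> T"
    then have v4: "v<4" and vm: "ver v n \<in> M" by (auto simp: T_def)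
    have "ver v n \<in> star (v, Suc n) M" using vm by (simp add: star_def ver_def)
    then have "v \<notin> S" using Mc[OF v4, of "Suc n"] by auto
    then show "v \<in> {0..<4}-S" using v4 by simp
  qed
  have Hin: "H \<in> Hs (Suc n) ({0..<4}-S-T)"
    unfolding Hs_def
  proof (intro CollectI conjI allI impI HH)
    fix v :: nat assume v4: "v < 4"
    have sM: "star (v,Suc n) M = star (v,Suc n) H \<union> (if v\<in>T then {ver v n} else {})"
      using sd[of "(v,Suc n)"] star_EE[OF MM, of "(v,Suc n)"] star_vset by simp
    have c: "if v\<in>S then star (v,Suc n) M = {} else (\<exists>e. star (v,Suc n) M = {e})" using Mc[OF v4, of "Suc n"] by simp
    have nv: "ver v n \<notin> star (v,Suc n) H" using ver_notin_hor HH unfolding star_def by blast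
    show "if v \<in> {0..<4}-S-T then (\<exists>e. star (v,Suc n) H = {e}) else star (v,Suc n) H = {}"
    proof (cases "v \<in> S")
      case True then show ?thesis using c sM by auto
    next
      case False
      show ?thesis
      proof (cases "v\<in>T")
        case True
        from c False obtain e where "star (v,Suc n) M = {e}" by auto
        then have "star (v,Suc n) H \<union> {ver v n} = {e}" using sM True by simp
        then have "star (v,Suc n) H = {}" using nv by (rule sing1)
        then show ?thesis using True by simp
      next
        case F2: False
        then show ?thesis using c sM False v4 by auto
      qed
    qed
  qed
  have Min: "M' \<in> PM n T"
    unfolding PM_def
  proof (intro CollectI conjI allI impI ballI MM)
    fix v x :: nat assume v4: "v < 4" and x: "x \<in> {1..n}"
    have sM: "star (v,x) M = (if v\<in>T \<and> x = n then {ver v n} else {}) \<union> star (v,x) M'"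
      using sd[of "(v,x)"] star_hor[OF HH, of "(v,x)"] star_vset x by auto
    have c: "\<exists>e. star (v,x) M = {e}" using Mc[OF v4, of x] x by auto
    have nv: "ver v n \<notin> star (v,x) M'" using ver_notin_EE MM unfolding star_def by blast
    show "if x = n \<and> v \<in> T then star (v, x) M' = {} else (\<exists>e. star (v, x) M' = {e})"
    proof (cases "x = n \<and> v \<in> T")
      case True
      from c obtain e where "star (v,x) M = {e}" by auto
      then have "{ver v n} \<union> star (v,x) M' = {e}" using sM True by simp
      then have "star (v,x) M' = {}" using nv by (rule sing2)
      then show ?thesis using True by simp
    next
      case False then show ?thesis using c sM by auto
    qed
  qed
  show "M \<in> (\<Union>T\<in>Pow({0..<4}-S). (\<lambda>(H,M'). H \<union> vset n T \<union> M') ` (Hs (Suc n) ({0..<4}-S-T) \<times> PM n T))"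
    using TS Hin Min decomp by blast
next
  fix M assume "M \<in> (\<Union>T\<in>Pow({0..<4}-S). (\<lambda>(H,M'). H \<union> vset n T \<union> M') ` (Hs (Suc n) ({0..<4}-S-T) \<times> PM n T))"
  then obtain T H M' where TS: "T \<subseteq> {0..<4}-S" and Hin: "H \<in> Hs (Suc n) ({0..<4}-S-T)"
    and Min: "M' \<in> PM n T" and decomp: "M = H \<union> vset n T \<union> M'" by auto
  have HH: "H \<subseteq> hor (Suc n)" and Hc: "\<And>v. v<4 \<Longrightarrow> if v \<in> {0..<4}-S-T then (\<exists>e. star (v,Suc n) H = {e}) else star (v,Suc n) H = {}"
    using Hin unfolding Hs_def by auto
  have MM: "M' \<subseteq> EE n" and Mc: "\<And>v x. v<4 \<Longrightarrow> x\<in>{1..n} \<Longrightarrow> if x = n \<and> v\<in>T then star (v,x) M' = {} else (\<exists>e. star (v,x) M' = {e})"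
    using Min unfolding PM_def by auto
  have sd: "star p M = star p H \<union> star p (vset n T) \<union> star p M'" for p using decomp star_Un by metis
  have sub: "M \<subseteq> EE (Suc n)"
    unfolding decomp EE_Suc[OF n] using HH MM TS unfolding vset_def by auto
  show "M \<in> PM (Suc n) S"
    unfolding PM_def
  proof (intro CollectI conjI allI impI ballI sub)
    fix v x :: nat assume v4: "v < 4" and x: "x \<in> {1..Suc n}"
    show "if x = Suc n \<and> v \<in> S then star (v, x) M = {} else (\<exists>e. star (v, x) M = {e})"
    proof (cases "x = Suc n")
      case True
      have sM: "star (v,x) M = star (v,x) H \<union> (if v\<in>T then {ver v n} else {})"
        using sd[of "(v,x)"] star_EE[OF MM, of "(v,x)"] star_vset True by simp
      show ?thesis using Hc[OF v4] sM TS True v4 by auto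
    next
      case False
      then have xn: "x \<in> {1..n}" using x by auto
      have sM: "star (v,x) M = (if v\<in>T \<and> x = n then {ver v n} else {}) \<union> star (v,x) M'"
        using sd[of "(v,x)"] star_hor[OF HH, of "(v,x)"] star_vset xn by auto
      show ?thesis using Mc[OF v4 xn] sM False by auto
    qed
  qed
qed

lemma finite_Hs: "finite (Hs w U)"
  by (rule finite_subset[of _ "Pow (hor w)"]) (auto simp: Hs_def finite_hor)

lemma PM_Suc_card:
  assumes n: "1 \<le> n" and S: "S \<subseteq> {0..<4}"
  shows "card (PM (Suc n) S) = (\<Sum>T\<in>Pow({0..<4}-S). card (Hs (Suc n) ({0..<4}-S-T)) * card (PM n T))"
proof -
  have "card (PM (Suc n) S) = (\<Sum>T\<in>Pow({0..<4}-S). card ((\<lambda>(H,M'). H \<union> vset n T \<union> M') ` (Hs (Suc n) ({0..<4}-S-T) \<times> PM n T)))"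
    unfolding PM_Suc_eq[OF n S]
  proof (rule card_UN_disjoint)
    show "finite (Pow ({0..<4} - S))" by simp
    show "\<forall>T\<in>Pow ({0..<4} - S). finite ((\<lambda>(H,M'). H \<union> vset n T \<union> M') ` (Hs (Suc n) ({0..<4}-S-T) \<times> PM n T))"
      using finite_Hs finite_PM by blast
    show "\<forall>T1\<in>Pow ({0..<4} - S). \<forall>T2\<in>Pow ({0..<4} - S). T1 \<noteq> T2 \<longrightarrow>
       (\<lambda>(H,M'). H \<union> vset n T1 \<union> M') ` (Hs (Suc n) ({0..<4}-S-T1) \<times> PM n T1) \<inter>
       (\<lambda>(H,M'). H \<union> vset n T2 \<union> M') ` (Hs (Suc n) ({0..<4}-S-T2) \<times> PM n T2) = {}"
    proof (intro ballI impI)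
      fix T1 T2 assume T1: "T1 \<in> Pow ({0..<4} - S)" and T2: "T2 \<in> Pow ({0..<4} - S)" and ne: "T1 \<noteq> T2"
      show "(\<lambda>(H,M'). H \<union> vset n T1 \<union> M') ` (Hs (Suc n) ({0..<4}-S-T1) \<times> PM n T1) \<inter>
       (\<lambda>(H,M'). H \<union> vset n T2 \<union> M') ` (Hs (Suc n) ({0..<4}-S-T2) \<times> PM n T2) = {}"
      proof (rule ccontr)
        assume "\<not> ?thesis"
        then obtain H1 M1 H2 M2 where h1: "H1 \<in> Hs (Suc n) ({0..<4}-S-T1)" "M1 \<in> PM n T1"
          and h2: "H2 \<in> Hs (Suc n) ({0..<4}-S-T2)" "M2 \<in> PM n T2"
          and eq: "H1 \<union> vset n T1 \<union> M1 = H2 \<union> vset n T2 \<union> M2" by auto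
        have s: "H1 \<subseteq> hor (Suc n)" "H2 \<subseteq> hor (Suc n)" "M1 \<subseteq> EE n" "M2 \<subseteq> EE n"
          using h1 h2 unfolding Hs_def PM_def by auto
        have t: "T1 \<subseteq> {0..<4}" "T2 \<subseteq> {0..<4}" using T1 T2 by auto
        have "T1 = {v. v<4 \<and> ver v n \<in> H1 \<union> vset n T1 \<union> M1}" using recoverT[OF t(1) s(1) s(3)] by (rule sym)
        also have "\<dots> = {v. v<4 \<and> ver v n \<in> H2 \<union> vset n T2 \<union> M2}" by (simp only: eq)
        also have "\<dots> = T2" by (rule recoverT[OF t(2) s(2) s(4)])
        finally have "T1 = T2" .
        then show False using ne by simp
      qed
    qed
  qed
  also have "\<dots> = (\<Sum>T\<in>Pow({0..<4}-S). card (Hs (Suc n) ({0..<4}-S-T)) * card (PM n T))"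
  proof (rule sum.cong[OF refl])
    fix T assume "T \<in> Pow({0..<4}-S)"
    have "inj_on (\<lambda>(H,M'). H \<union> vset n T \<union> M') (Hs (Suc n) ({0..<4}-S-T) \<times> PM n T)"
    proof (rule inj_onI, clarify)
      fix H1 M1 H2 M2 assume h1: "H1 \<in> Hs (Suc n) ({0..<4}-S-T)" "M1 \<in> PM n T"
          and h2: "H2 \<in> Hs (Suc n) ({0..<4}-S-T)" "M2 \<in> PM n T"
          and eq: "H1 \<union> vset n T \<union> M1 = H2 \<union> vset n T \<union> M2"
      have s: "H1 \<subseteq> hor (Suc n)" "H2 \<subseteq> hor (Suc n)" "M1 \<subseteq> EE n" "M2 \<subseteq> EE n"
        using h1 h2 unfolding Hs_def PM_def by auto
      show "H1 = H2 \<and> M1 = M2"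
        using recoverH[OF s(1) s(3), of T] recoverH[OF s(2) s(4), of T]
          recoverM[OF s(1) s(3), of T] recoverM[OF s(2) s(4), of T] eq by simp
    qed
    then show "card ((\<lambda>(H,M'). H \<union> vset n T \<union> M') ` (Hs (Suc n) ({0..<4}-S-T) \<times> PM n T)) =
       card (Hs (Suc n) ({0..<4}-S-T)) * card (PM n T)"
      by (simp add: card_image card_cartesian_product)
  qed
  finally show ?thesis .
qed

definition good :: "nat set \<Rightarrow> bool \<times> bool \<times> bool \<times> bool \<Rightarrow> bool" where
  "good U b = (case b of (b0,b1,b2,b3) \<Rightarrow>
     (if 0\<in>U then b0\<noteq>b3 else \<not>b0\<and>\<not>b3) \<and> (if 1\<in>U then b1\<noteq>b0 else \<not>b1\<and>\<not>b0) \<and>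
     (if 2\<in>U then b2\<noteq>b1 else \<not>b2\<and>\<not>b1) \<and> (if 3\<in>U then b3\<noteq>b2 else \<not>b3\<and>\<not>b2))"

lemma cs: "card {b::bool\<times>bool\<times>bool\<times>bool. P b} = (\<Sum>b\<in>UNIV. if P b then 1 else 0)"
proof -
  have e: "{b. P b} = {b\<in>UNIV. P b}" by simp
  have "card {b\<in>UNIV. P b} = (\<Sum>b\<in>{b\<in>UNIV. P b}. 1)" by (rule card_eq_sum)
  also have "\<dots> = (\<Sum>b\<in>UNIV. if P b then 1 else (0::nat))" by (rule sum.inter_filter) simp
  finally show ?thesis unfolding e .
qed
lemma card_good: "card {b. good U b} = (\<Sum>b0\<in>{False,True}. \<Sum>b1\<in>{False,True}. \<Sum>b2\<in>{False,True}. \<Sum>b3\<in>{False,True}.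
    if good U (b0,b1,b2,b3) then 1 else 0)"
  unfolding cs UNIV_bool[symmetric]
  by (simp only: sum.cartesian_product UNIV_Times_UNIV case_prod_beta' prod.collapse)


definition Ed :: "nat \<Rightarrow> nat \<Rightarrow> (nat\<times>nat) set" where "Ed w i = {(i,w),(Suc i mod 4, w)}"

lemma hor_Ed: "hor w = {Ed w 0, Ed w 1, Ed w 2, Ed w 3}"
proof -
  have m: "Suc 0 mod 4 = (1::nat)" "Suc 1 mod 4 = (2::nat)" "Suc 2 mod 4 = (3::nat)" "Suc 3 mod 4 = (0::nat)" by simp_all
  show ?thesis unfolding hor_def Ed_def m by (rule refl)
qed

lemma Ed_inj: assumes "i<4" "j<4" shows "Ed w i = Ed w j \<longleftrightarrow> i = j"
proof
  assume eq: "Ed w i = Ed w j"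
  have "(i,w) \<in> Ed w i" by (simp add: Ed_def)
  then have "(i,w) \<in> Ed w j" using eq by simp
  then have a: "i = j \<or> i = Suc j mod 4" by (simp add: Ed_def)
  have "(j,w) \<in> Ed w j" by (simp add: Ed_def)
  then have "(j,w) \<in> Ed w i" using eq by simp
  then have b: "j = i \<or> j = Suc i mod 4" by (simp add: Ed_def)
  show "i = j" using a b assms by presburger
qed simp

definition Hof :: "nat \<Rightarrow> bool\<times>bool\<times>bool\<times>bool \<Rightarrow> (nat\<times>nat) set set" where
  "Hof w b = (case b of (b0,b1,b2,b3) \<Rightarrow> {e. (e = Ed w 0 \<and> b0) \<or> (e = Ed w 1 \<and> b1) \<or> (e = Ed w 2 \<and> b2) \<or> (e = Ed w 3 \<and> b3)})"

lemma two: assumes "A \<noteq> B"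
  shows "(\<exists>e. {x. (x=A\<and>p) \<or> (x=B\<and>q)} = {e}) \<longleftrightarrow> p\<noteq>q" "{x. (x=A\<and>p) \<or> (x=B\<and>q)} = {} \<longleftrightarrow> \<not>p\<and>\<not>q"
proof -
  show "(\<exists>e. {x. (x=A\<and>p) \<or> (x=B\<and>q)} = {e}) \<longleftrightarrow> p\<noteq>q"
  proof (cases p; cases q)
    assume "p" "q" then have "{x. (x=A\<and>p) \<or> (x=B\<and>q)} = {A,B}" by auto
    moreover have "\<forall>e. {A,B} \<noteq> {e}" using assms by (auto simp: doubleton_eq_iff)
    ultimately show ?thesis using \<open>p\<close> \<open>q\<close> by simp
  qed auto
  show "{x. (x=A\<and>p) \<or> (x=B\<and>q)} = {} \<longleftrightarrow> \<not>p\<and>\<not>q" by auto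
qed

lemma all4: "(\<forall>v<(4::nat). P v) \<longleftrightarrow> P 0 \<and> P 1 \<and> P 2 \<and> P 3"
  by (auto simp: eval_nat_numeral less_Suc_eq)

lemma Ed_ne: "Ed w 0 \<noteq> Ed w 3" "Ed w 1 \<noteq> Ed w 0" "Ed w 2 \<noteq> Ed w 1" "Ed w 3 \<noteq> Ed w 2"
  using Ed_inj[of 0 3 w] Ed_inj[of 1 0 w] Ed_inj[of 2 1 w] Ed_inj[of 3 2 w] by auto

lemma cond_iff:
  "(\<forall>v<4. if v\<in>U then (\<exists>e. star (v,w) (Hof w b) = {e}) else star (v,w) (Hof w b) = {}) \<longleftrightarrow> good U b"
proof -
  obtain b0 b1 b2 b3 where b: "b = (b0,b1,b2,b3)" by (cases b) auto
  have s0: "star (0,w) (Hof w b) = {x. (x = Ed w 0 \<and> b0) \<or> (x = Ed w 3 \<and> b3)}"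
    unfolding b by (auto simp: star_def Hof_def Ed_def)
  have s1: "star (1,w) (Hof w b) = {x. (x = Ed w 1 \<and> b1) \<or> (x = Ed w 0 \<and> b0)}"
    unfolding b by (auto simp: star_def Hof_def Ed_def)
  have s2: "star (2,w) (Hof w b) = {x. (x = Ed w 2 \<and> b2) \<or> (x = Ed w 1 \<and> b1)}"
    unfolding b by (auto simp: star_def Hof_def Ed_def)
  have s3: "star (3,w) (Hof w b) = {x. (x = Ed w 3 \<and> b3) \<or> (x = Ed w 2 \<and> b2)}"
    unfolding b by (auto simp: star_def Hof_def Ed_def)
  show ?thesis
    unfolding all4 s0 s1 s2 s3 two[OF Ed_ne(1)] two[OF Ed_ne(2)] two[OF Ed_ne(3)] two[OF Ed_ne(4)]
    by (simp add: good_def b)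
qed


lemma Hof_sub: "Hof w b \<subseteq> hor w" by (cases b) (auto simp: Hof_def hor_Ed)

lemma inj_Hof: "inj (Hof w)"
proof (rule injI)
  fix b b' assume eq: "Hof w b = Hof w b'"
  obtain b0 b1 b2 b3 where b: "b = (b0,b1,b2,b3)" by (cases b) auto
  obtain c0 c1 c2 c3 where c: "b' = (c0,c1,c2,c3)" by (cases b') auto
  have m: "Ed w i \<in> Hof w (x0,x1,x2,x3) \<longleftrightarrow> (i=0\<and>x0 \<or> i=1\<and>x1 \<or> i=2\<and>x2 \<or> i=3\<and>x3)" if "i<4" for i x0 x1 x2 x3
    using that by (auto simp: Hof_def Ed_inj[OF that])
  have "b0 = c0" using m[of 0 b0 b1 b2 b3] m[of 0 c0 c1 c2 c3] eq b c by simp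
  moreover have "b1 = c1" using m[of 1 b0 b1 b2 b3] m[of 1 c0 c1 c2 c3] eq b c by simp
  moreover have "b2 = c2" using m[of 2 b0 b1 b2 b3] m[of 2 c0 c1 c2 c3] eq b c by simp
  moreover have "b3 = c3" using m[of 3 b0 b1 b2 b3] m[of 3 c0 c1 c2 c3] eq b c by simp
  ultimately show "b = b'" using b c by simp
qed

lemma Hs_eq: "Hs w U = Hof w ` {b. good U b}"
proof (rule set_eqI, rule iffI)
  fix H assume H: "H \<in> Hs w U"
  then have Hh: "H \<subseteq> hor w" and Hc: "\<forall>v<4. if v\<in>U then (\<exists>e. star (v,w) H = {e}) else star (v,w) H = {}"
    unfolding Hs_def by simp_all
  define b where "b = (Ed w 0 \<in> H, Ed w 1 \<in> H, Ed w 2 \<in> H, Ed w 3 \<in> H)"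
  have HH: "H = Hof w b" using Hh unfolding b_def Hof_def hor_Ed by auto
  have "good U b" using Hc unfolding HH cond_iff .
  then show "H \<in> Hof w ` {b. good U b}" using HH by blast
next
  fix H assume "H \<in> Hof w ` {b. good U b}"
  then obtain b where HH: "H = Hof w b" and g: "good U b" by blast
  have c: "\<forall>v<4. if v\<in>U then (\<exists>e. star (v,w) H = {e}) else star (v,w) H = {}"
    unfolding HH cond_iff by (rule g)
  show "H \<in> Hs w U" unfolding Hs_def by (rule CollectI, rule conjI[OF _ c]) (simp add: HH Hof_sub)
qed

lemma card_Hs: "card (Hs w U) = card {b. good U b}"
  unfolding Hs_eq by (rule card_image) (rule inj_on_subset[OF inj_Hof], simp)

lemma EE1: "EE 1 = hor 1" unfolding EE_def by simp

lemma PM1: assumes "S \<subseteq> {0..<4}" shows "PM 1 S = Hs 1 ({0..<4}-S)"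
  unfolding PM_def Hs_def EE1
proof (rule Collect_cong)
  fix M
  show "(M \<subseteq> hor 1 \<and> (\<forall>v<4. \<forall>x\<in>{1..1}. if x = 1 \<and> v \<in> S then star (v, x) M = {} else \<exists>e. star (v, x) M = {e})) =
    (M \<subseteq> hor 1 \<and> (\<forall>v<4. if v \<in> {0..<4} - S then \<exists>e. star (v, 1) M = {e} else star (v, 1) M = {}))"
    by auto
qed

lemma sum_Pow_insert:
  assumes "finite A" "a \<notin> A"
  shows "sum f (Pow (insert a A)) = sum f (Pow A) + sum (\<lambda>B. f (insert a B)) (Pow A)"
proof -
  have d: "Pow A \<inter> insert a ` Pow A = {}" using assms(2) by auto
  have i: "inj_on (insert a) (Pow A)"
    by (rule inj_onI) (use assms(2) in \<open>auto simp: insert_ident\<close>)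
  have "sum f (Pow (insert a A)) = sum f (Pow A) + sum f (insert a ` Pow A)"
    unfolding Pow_insert by (rule sum.union_disjoint) (use assms(1) d in auto)
  also have "sum f (insert a ` Pow A) = sum (\<lambda>B. f (insert a B)) (Pow A)"
    by (simp add: sum.reindex[OF i])
  finally show ?thesis .
qed

lemma four: "{0..<4::nat} = {0,1,2,3}" by (auto simp: eval_nat_numeral)

lemma rec_a: assumes "1 \<le> n" shows
  "card (PM (Suc n) {}) = 2 * card (PM n {}) + card (PM n {0,1,2,3}) + card (PM n {0,1})
     + card (PM n {1,2}) + card (PM n {2,3}) + card (PM n {0,3})"
  using PM_Suc_card[OF assms, of "{}"]
  unfolding four card_Hs card_good
  by (simp add: sum_Pow_insert good_def)


lemma rec_b: assumes "1 \<le> n" shows "card (PM (Suc n) {0,1,2,3}) = card (PM n {})"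
  using PM_Suc_card[OF assms, of "{0,1,2,3}"]
  unfolding four card_Hs card_good
  by (simp add: sum_Pow_insert good_def)

lemma rec_c1: assumes "1 \<le> n" shows "card (PM (Suc n) {0,1}) = card (PM n {}) + card (PM n {2,3})"
  using PM_Suc_card[OF assms, of "{0,1}"] unfolding four card_Hs card_good
  by (simp add: sum_Pow_insert good_def insert_commute insert_Diff_if)
lemma rec_c2: assumes "1 \<le> n" shows "card (PM (Suc n) {1,2}) = card (PM n {}) + card (PM n {0,3})"
  using PM_Suc_card[OF assms, of "{1,2}"] unfolding four card_Hs card_good
  by (simp add: sum_Pow_insert good_def insert_commute insert_Diff_if)
lemma rec_c3: assumes "1 \<le> n" shows "card (PM (Suc n) {2,3}) = card (PM n {}) + card (PM n {0,1})"
  using PM_Suc_card[OF assms, of "{2,3}"] unfolding four card_Hs card_good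
  by (simp add: sum_Pow_insert good_def insert_commute insert_Diff_if)
lemma rec_c4: assumes "1 \<le> n" shows "card (PM (Suc n) {0,3}) = card (PM n {}) + card (PM n {1,2})"
  using PM_Suc_card[OF assms, of "{0,3}"] unfolding four card_Hs card_good
  by (simp add: sum_Pow_insert good_def insert_commute insert_Diff_if)

lemma PM1c: assumes "S \<subseteq> {0,1,2,3}" shows "card (PM 1 S) = card {b. good ({0,1,2,3}-S) b}"
  using PM1[of S] assms unfolding four by (simp add: card_Hs)

lemma base1: "card (PM 1 {}) = 2" "card (PM 1 {0,1,2,3}) = 1"
  "card (PM 1 {0,1}) = 1" "card (PM 1 {1,2}) = 1" "card (PM 1 {2,3}) = 1" "card (PM 1 {0,3}) = 1"
  by (subst PM1c, simp, unfold card_good, simp add: good_def)+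

definition PP :: "nat \<Rightarrow> real" where "PP k = (2 + sqrt 3) ^ k + (2 - sqrt 3) ^ k"

lemma sq3: "sqrt 3 * sqrt 3 = (3::real)" by simp

lemma PP_rec: "PP (k+2) = 4 * PP (k+1) - PP k"
proof -
  have r: "(2 + sqrt 3) ^ 2 = 4 * (2 + sqrt 3) - (1::real)" by (simp add: power2_eq_square algebra_simps sq3)
  have s: "(2 - sqrt 3) ^ 2 = 4 * (2 - sqrt 3) - (1::real)" by (simp add: power2_eq_square algebra_simps sq3)
  have "PP (k+2) = (2 + sqrt 3) ^ k * (2 + sqrt 3) ^ 2 + (2 - sqrt 3) ^ k * (2 - sqrt 3) ^ 2"
    unfolding PP_def power_add by (rule refl)
  also have "\<dots> = 4 * PP (k+1) - PP k" unfolding r s PP_def by (simp add: algebra_simps)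
  finally show ?thesis .
qed

lemma PP1: "PP 1 = 4" by (simp add: PP_def)
lemma PP2: "PP 2 = 14" by (simp add: PP_def power2_eq_square algebra_simps sq3)

lemma RS: "(2 + sqrt 3) ^ n * (2 - sqrt 3) ^ n = (1::real)"
proof -
  have "(2 + sqrt 3) * (2 - sqrt 3) = (1::real)" by (simp add: algebra_simps sq3)
  then show ?thesis by (metis power_mult_distrib power_one)
qed

lemma Asq: "(((3 + sqrt 3) * (2 + sqrt 3) ^ n + (3 - sqrt 3) * (2 - sqrt 3) ^ n) / 6)\<^sup>2 = PP (2*n+1) / 6 + 1/3"
proof -
  define R where "R = (2 + sqrt 3) ^ n"
  define S where "S = (2 - sqrt 3) ^ n"
  have rs: "R * S = 1" using RS unfolding R_def S_def .
  have pp: "PP (2*n+1) = (2 + sqrt 3) * R * R + (2 - sqrt 3) * S * S"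
    unfolding PP_def R_def S_def by (simp add: power_add power_mult power2_eq_square mult.commute)
  have "(((3 + sqrt 3) * R + (3 - sqrt 3) * S) / 6)\<^sup>2
      = ((3 + sqrt 3) * (3 + sqrt 3) * (R * R) + 2 * ((3 + sqrt 3) * (3 - sqrt 3)) * (R * S) + (3 - sqrt 3) * (3 - sqrt 3) * (S*S)) / 36"
    by (simp add: power2_eq_square algebra_simps)
  also have "(3 + sqrt 3) * (3 + sqrt 3) = 6 * (2 + sqrt (3::real))" by (simp add: algebra_simps sq3)
  also have "(3 - sqrt 3) * (3 - sqrt 3) = 6 * (2 - sqrt (3::real))" by (simp add: algebra_simps sq3)
  also have "(3 + sqrt 3) * (3 - sqrt 3) = (6::real)" by (simp add: algebra_simps sq3)
  also have "(6 * (2 + sqrt 3) * (R * R) + 2 * 6 * (R * S) + 6 * (2 - sqrt 3) * (S * S)) / 36 = PP (2*n+1) / 6 + 1/3"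
    unfolding rs pp by (simp add: field_simps)
  finally have "(((3 + sqrt 3) * R + (3 - sqrt 3) * S) / 6)\<^sup>2 = PP (2*n+1) / 6 + 1/3" .
  then show ?thesis unfolding R_def S_def .
qed

lemma Bsq: "2 * (((2 + sqrt 3) ^ n - (2 - sqrt 3) ^ n) / (2 * sqrt 3))\<^sup>2 = PP (2*n) / 6 - 1/3"
proof -
  define R where "R = (2 + sqrt 3) ^ n"
  define S where "S = (2 - sqrt 3) ^ n"
  have rs: "R * S = 1" using RS unfolding R_def S_def .
  have pp: "PP (2*n) = R * R + S * S"
    unfolding PP_def R_def S_def by (simp add: power_mult power2_eq_square mult.commute)
  have "2 * ((R - S) / (2 * sqrt 3))\<^sup>2 = 2 * (R*R - 2 * (R*S) + S*S) / (4 * (sqrt 3 * sqrt 3))"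
    by (simp add: power2_eq_square algebra_simps)
  also have "\<dots> = (R*R + S*S) / 6 - 1/3" unfolding rs sq3 by (simp add: field_simps)
  finally show ?thesis unfolding R_def[symmetric] S_def[symmetric] pp .
qed

lemma main: "real (card (PM (Suc m) {})) = PP (m+2)/6 + (-1)^(m+1)/3
  \<and> real (card (PM (Suc m) {0,1,2,3})) = PP (m+1)/6 - (-1)^(m+1)/3
  \<and> real (card (PM (Suc m) {0,1})) = (PP (m+2) - PP (m+1))/12 - (-1)^(m+1)/6
  \<and> real (card (PM (Suc m) {1,2})) = (PP (m+2) - PP (m+1))/12 - (-1)^(m+1)/6
  \<and> real (card (PM (Suc m) {2,3})) = (PP (m+2) - PP (m+1))/12 - (-1)^(m+1)/6
  \<and> real (card (PM (Suc m) {0,3})) = (PP (m+2) - PP (m+1))/12 - (-1)^(m+1)/6"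
proof (induction m)
  case 0
  have p2: "PP (0+2) = 14" by (simp only: add_0_left PP2)
  have p1: "PP (0+1) = 4" by (simp only: add_0_left PP1)
  show ?case using base1 unfolding p1 p2 by simp
next
  case (Suc m)
  have n: "1 \<le> Suc m" by simp
  have ra: "real (card (PM (Suc (Suc m)) {})) = 2 * real (card (PM (Suc m) {})) + real (card (PM (Suc m) {0,1,2,3}))
     + real (card (PM (Suc m) {0,1})) + real (card (PM (Suc m) {1,2})) + real (card (PM (Suc m) {2,3})) + real (card (PM (Suc m) {0,3}))"
    using rec_a[OF n] by simp
  have rb: "real (card (PM (Suc (Suc m)) {0,1,2,3})) = real (card (PM (Suc m) {}))" using rec_b[OF n] by simp
  have rc1: "real (card (PM (Suc (Suc m)) {0,1})) = real (card (PM (Suc m) {})) + real (card (PM (Suc m) {2,3}))"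
    using rec_c1[OF n] by simp
  have rc2: "real (card (PM (Suc (Suc m)) {1,2})) = real (card (PM (Suc m) {})) + real (card (PM (Suc m) {0,3}))"
    using rec_c2[OF n] by simp
  have rc3: "real (card (PM (Suc (Suc m)) {2,3})) = real (card (PM (Suc m) {})) + real (card (PM (Suc m) {0,1}))"
    using rec_c3[OF n] by simp
  have rc4: "real (card (PM (Suc (Suc m)) {0,3})) = real (card (PM (Suc m) {})) + real (card (PM (Suc m) {1,2}))"
    using rec_c4[OF n] by simp
  have z: "PP (Suc m + 2) = 4 * PP (m+2) - PP (m+1)" using PP_rec[of "m+1"] by simp
  have y: "PP (Suc m + 1) = PP (m+2)" by simp
  have sg: "(-1::real)^(Suc m + 1) = - ((-1)^(m+1))" by simp
  from Suc.IH have i1: "real (card (PM (Suc m) {})) = PP (m+2)/6 + (-1)^(m+1)/3"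
    and i2: "real (card (PM (Suc m) {0,1,2,3})) = PP (m+1)/6 - (-1)^(m+1)/3"
    and i3: "real (card (PM (Suc m) {0,1})) = (PP (m+2) - PP (m+1))/12 - (-1)^(m+1)/6"
    and i4: "real (card (PM (Suc m) {1,2})) = (PP (m+2) - PP (m+1))/12 - (-1)^(m+1)/6"
    and i5: "real (card (PM (Suc m) {2,3})) = (PP (m+2) - PP (m+1))/12 - (-1)^(m+1)/6"
    and i6: "real (card (PM (Suc m) {0,3})) = (PP (m+2) - PP (m+1))/12 - (-1)^(m+1)/6"
    by blast+
  show ?case unfolding z y sg ra rb rc1 rc2 rc3 rc4 i1 i2 i3 i4 i5 i6
    by (intro conjI; simp add: field_simps)
qed

lemma Gval: assumes "n \<ge> 1" shows "real (card (PM n {})) = PP (n+1)/6 + (-1)^n/3"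
proof -
  obtain m where m: "n = Suc m" using assms by (cases n) auto
  show ?thesis using main[of m] unfolding m by simp
qed

theorem theorem3:
  fixes G :: "nat \<Rightarrow> nat" and A B :: "nat \<Rightarrow> real"
  defines "G \<equiv> \<lambda>n. num_domino_tilings (cart_prod (cycle_graph 4) (path_graph n))"
    and "A \<equiv> \<lambda>n. ((3 + sqrt 3) * (2 + sqrt 3) ^ n + (3 - sqrt 3) * (2 - sqrt 3) ^ n) / 6"
    and "B \<equiv> \<lambda>n. ((2 + sqrt 3) ^ n - (2 - sqrt 3) ^ n) / (2 * sqrt 3)"
  shows "(\<forall>n\<ge>1. real (G n) =
            ((2 + sqrt 3) ^ (n + 1) + (2 - sqrt 3) ^ (n + 1)) / 6 + (-1) ^ n / 3)
       \<and> (\<forall>n\<ge>1. real (G (2 * n)) = (A n)\<^sup>2 \<and> real (G (2 * n - 1)) = 2 * (B n)\<^sup>2)"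
proof (intro conjI allI impI)
  fix n :: nat assume n: "n \<ge> 1"
  show "real (G n) = ((2 + sqrt 3) ^ (n + 1) + (2 - sqrt 3) ^ (n + 1)) / 6 + (-1) ^ n / 3"
    unfolding G_def G_PM using Gval[OF n] by (simp add: PP_def)
next
  fix n :: nat assume n: "n \<ge> 1"
  have "real (G (2*n)) = PP (2*n+1)/6 + (-1)^(2*n)/3"
    unfolding G_def G_PM by (rule Gval) (use n in simp)
  then show "real (G (2 * n)) = (A n)\<^sup>2" unfolding A_def using Asq[of n] by simp
next
  fix n :: nat assume n: "n \<ge> 1"
  have "real (G (2*n-1)) = PP (2*n-1+1)/6 + (-1)^(2*n-1)/3"
    unfolding G_def G_PM by (rule Gval) (use n in simp)
  moreover have "2*n-1+1 = 2*n" using n by simp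
  moreover have "(-1::real)^(2*n-1) = -1"
  proof -
    have "odd (2*n-1)" using n by simp
    then show ?thesis by simp
  qed
  ultimately show "real (G (2 * n - 1)) = 2 * (B n)\<^sup>2" unfolding B_def using Bsq[of n] by simp
qed

end
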